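(* The fine transition function $\phi:\mathrm{Conf}\to\mathrm{Conf}$ is the left Kan extension of the fully shifted sub-local transition function $\underline{\delta}:\mathrm{Sub}\to\mathrm{Conf}$ along the (monotonic) projection $\pi_2:\mathrm{Sub}\to\mathrm{Conf}$, $\pi_2(g,c)=c$. That is, $\underline{\delta}\Rightarrow\phi\circ\pi_2$, and for every monotonic $f:\mathrm{Conf}\to\mathrm{Conf}$ with $\underline{\delta}\Rightarrow f\circ\pi_2$ we have $\phi\Rightarrow f$.
   Context: A cellular automaton is given by a group $G$, a neighborhood $N\subseteq G$ (not necessarily finite), a finite set of states $Q$ and $\delta:Q^N\to Q$. $\mathrm{Conf}$ is the set of partial functions $G\to Q$ with support $|c|$; $c\restriction S$ is restriction to $S\cap|c|$; $\mathrm{Conf}$ is partially ordered by $c\preceq c'$ iff for all $g\in|c|$, $g\in|c'|$ and $c(g)=c'(g)$. For $c\in\mathrm{Conf}$, $g\in G$, $c\blacktriangleleft g$ has support $\{h\mid g\cdot h\in|c|\}$ and $(c\blacktriangleleft g)(h)=c(g\cdot h)$. $g\cdot M=\{g\cdot m\mid m\in M\}$. $c_g=c\restriction(g\cdot N\cap|c|)$; $\det(c)=\{g\in G\mid \exists q\in Q\ \forall c'\in Q^{g\cdot N}:\ c'\restriction|c_g|=c_g\implies \delta(c'\blacktriangleleft g)=q\}$ and $q_{c,g}$ is the unique such $q$. The fine transition function $\phi$ has $|\phi(c)|=\det(c)$ and $\phi(c)(g)=q_{c,g}$. $\mathrm{Sub}=\bigcup_{g\in G,\,M\subseteq N}(\{g\}\times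 Q^{g\cdot M})$ ordered by $(g,c)\preceq(g',c')$ iff $g=g'$ and $c\preceq c'$; $\underline{\delta}(g,c)$ is the configuration with support $\{g\}\cap\det(c)$ and, if $g\in\det(c)$, value $q_{c,g}$ at $g$. For posets $X,Y$, $f:X\to Y$ is monotonic if $x\preceq x'\Rightarrow f(x)\preceq f(x')$; for monotonic $f,f'$, $f\Rightarrow f'$ iff $f(x)\preceq f'(x)$ for all $x$. Given posets $A,B,C$ and monotonic $i:A\to B$, $f:A\to C$, a monotonic $g:B\to C$ is the left Kan extension of $f$ along $i$ if it is the $\Rightarrow$-minimum of $\{h:B\to C\text{ monotonic}\mid f\Rightarrow h\circ i\}$. *)

theory Defs
  imports Main
begin

text \<open>The group G is a type of class group_add (group operation written +,
  not assumed commutative). Configurations are partial maps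
  'g \<rightharpoonup> 'q; the support is dom, the order is map_le. Elements of Q^N are
  maps with domain exactly N; the local rule delta is a function on maps and is
  only ever applied to maps with domain N.\<close>

definition lshift :: "'g::group_add set \<Rightarrow> 'g \<Rightarrow> 'g set" where
  "lshift M g = (\<lambda>m. g + m) ` M"

definition conf_shift :: "('g::group_add \<rightharpoonup> 'q) \<Rightarrow> 'g \<Rightarrow> ('g \<rightharpoonup> 'q)" where
  "conf_shift c g = (\<lambda>h. c (g + h))"

definition local_conf :: "'g::group_add set \<Rightarrow> ('g \<rightharpoonup> 'q) \<Rightarrow> 'g \<Rightarrow> ('g \<rightharpoonup> 'q)" where
  "local_conf N c g = c |` (lshift N g \<inter> dom c)"

definition determines :: "'g::group_add set \<Rightarrow> (('g \<rightharpoonup> 'q) \<Rightarrow> 'q) \<Rightarrow> ('g \<rightharpoonup> 'q) \<Rightarrow> 'g \<Rightarrow> 'q \<Rightarrow> bool" where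
  "determines N \<delta> c g q \<longleftrightarrow>
     (\<forall>c'. dom c' = lshift N g \<longrightarrow> c' |` dom (local_conf N c g) = local_conf N c g
            \<longrightarrow> \<delta> (conf_shift c' g) = q)"

definition det :: "'g::group_add set \<Rightarrow> (('g \<rightharpoonup> 'q) \<Rightarrow> 'q) \<Rightarrow> ('g \<rightharpoonup> 'q) \<Rightarrow> 'g set" where
  "det N \<delta> c = {g. \<exists>q. determines N \<delta> c g q}"

definition det_val :: "'g::group_add set \<Rightarrow> (('g \<rightharpoonup> 'q) \<Rightarrow> 'q) \<Rightarrow> ('g \<rightharpoonup> 'q) \<Rightarrow> 'g \<Rightarrow> 'q" where
  "det_val N \<delta> c g = (THE q. determines N \<delta> c g q)"

definition fine_trans :: "'g::group_add set \<Rightarrow> (('g \<rightharpoonup> 'q) \<Rightarrow> 'q) \<Rightarrow> ('g \<rightharpoonup> 'q) \<Rightarrow> ('g \<rightharpoonup> 'q)" where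
  "fine_trans N \<delta> c = (\<lambda>g. if g \<in> det N \<delta> c then Some (det_val N \<delta> c g) else None)"

definition Sub :: "'g::group_add set \<Rightarrow> ('g \<times> ('g \<rightharpoonup> 'q)) set" where
  "Sub N = {(g, c). \<exists>M. M \<subseteq> N \<and> dom c = lshift M g}"

definition sub_le :: "('g \<times> ('g \<rightharpoonup> 'q)) \<Rightarrow> ('g \<times> ('g \<rightharpoonup> 'q)) \<Rightarrow> bool" where
  "sub_le x y \<longleftrightarrow> fst x = fst y \<and> snd x \<subseteq>\<^sub>m snd y"

definition sub_delta :: "'g::group_add set \<Rightarrow> (('g \<rightharpoonup> 'q) \<Rightarrow> 'q) \<Rightarrow> ('g \<times> ('g \<rightharpoonup> 'q)) \<Rightarrow> ('g \<rightharpoonup> 'q)" where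
  "sub_delta N \<delta> x = (\<lambda>h. if h = fst x \<and> fst x \<in> det N \<delta> (snd x)
                          then Some (det_val N \<delta> (snd x) (fst x)) else None)"

definition is_left_Kan_ext ::
  "'a set \<Rightarrow> ('a \<Rightarrow> 'a \<Rightarrow> bool) \<Rightarrow> 'b set \<Rightarrow> ('b \<Rightarrow> 'b \<Rightarrow> bool) \<Rightarrow> 'c set \<Rightarrow> ('c \<Rightarrow> 'c \<Rightarrow> bool)
   \<Rightarrow> ('a \<Rightarrow> 'b) \<Rightarrow> ('a \<Rightarrow> 'c) \<Rightarrow> ('b \<Rightarrow> 'c) \<Rightarrow> bool" where
  "is_left_Kan_ext A leA B leB C leC i f g \<longleftrightarrow>
     i ` A \<subseteq> B \<and> monotone_on A leA leB i \<and>
     f ` A \<subseteq> C \<and> monotone_on A leA leC f \<and>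
     g ` B \<subseteq> C \<and> monotone_on B leB leC g \<and>
     (\<forall>a\<in>A. leC (f a) (g (i a))) \<and>
     (\<forall>h. h ` B \<subseteq> C \<and> monotone_on B leB leC h \<and> (\<forall>a\<in>A. leC (f a) (h (i a)))
          \<longrightarrow> (\<forall>b\<in>B. leC (g b) (h b)))"

end

theory Submission
  imports Defs
begin

lemma local_mono:
  assumes "c \<subseteq>\<^sub>m c'"
  shows "local_conf N c g \<subseteq>\<^sub>m local_conf N c' g"
  using assms unfolding local_conf_def map_le_def restrict_map_def
  by (auto split: if_splits simp: dom_def)

lemma determines_mono:
  assumes "c \<subseteq>\<^sub>m c'" "determines N \<delta> c g q"
  shows "determines N \<delta> c' g q"
  unfolding determines_def
proof (intro allI impI)
  fix d assume d1: "dom d = lshift N g" and d2: "d |` dom (local_conf N c' g) = local_conf N c' g"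
  have le: "local_conf N c g \<subseteq>\<^sub>m local_conf N c' g" using local_mono[OF assms(1)] .
  have "d |` dom (local_conf N c g) = local_conf N c g"
  proof
    fix x show "(d |` dom (local_conf N c g)) x = local_conf N c g x"
    proof (cases "x \<in> dom (local_conf N c g)")
      case True
      then have "x \<in> dom (local_conf N c' g)" using map_le_implies_dom_le[OF le] by blast
      then have "d x = local_conf N c' g x" using fun_cong[OF d2, of x] by simp
      also have "\<dots> = local_conf N c g x" using le True by (auto simp: map_le_def)
      finally have "d x = local_conf N c g x" .
      then show ?thesis using True by (simp add: restrict_map_def)
    next
      case False then show ?thesis by (auto simp: restrict_map_def domIff)
    qed
  qed
  then show "\<delta> (conf_shift d g) = q" using assms(2) d1 unfolding determines_def by blast
qed

lemma determines_unique:
  assumes "determines N \<delta> c g q" "determines N \<delta> c g q'"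
  shows "q = q'"
proof -
  define d where "d = (\<lambda>h. if h \<in> lshift N g then (case c h of Some v \<Rightarrow> Some v | None \<Rightarrow> Some undefined) else None)"
  have "dom d = lshift N g" unfolding d_def by (auto split: option.splits if_splits)
  moreover have "d |` dom (local_conf N c g) = local_conf N c g"
  proof
    fix x show "(d |` dom (local_conf N c g)) x = local_conf N c g x"
      unfolding d_def local_conf_def restrict_map_def
      by (cases "c x") (auto simp: domIff)
  qed
  ultimately have "\<delta> (conf_shift d g) = q" "\<delta> (conf_shift d g) = q'"
    using assms unfolding determines_def by blast+
  then show ?thesis by simp
qed

lemma det_val_eq:
  assumes "determines N \<delta> c g q" shows "det_val N \<delta> c g = q"
  unfolding det_val_def
proof (rule the_equality)
  show "determines N \<delta> c g q" by (rule assms)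
  fix q' assume "determines N \<delta> c g q'"
  then show "q' = q" using assms determines_unique by metis
qed

lemma det_val_mono:
  assumes "c \<subseteq>\<^sub>m c'" "g \<in> det N \<delta> c"
  shows "g \<in> det N \<delta> c'" "det_val N \<delta> c' g = det_val N \<delta> c g"
proof -
  obtain q where q: "determines N \<delta> c g q" using assms(2) by (auto simp: det_def)
  have q': "determines N \<delta> c' g q" using determines_mono[OF assms(1) q] .
  then show "g \<in> det N \<delta> c'" by (auto simp: det_def)
  show "det_val N \<delta> c' g = det_val N \<delta> c g"
    using det_val_eq[OF q] det_val_eq[OF q'] by simp
qed

lemma local_local: "local_conf N (local_conf N c g) g = local_conf N c g"
  unfolding local_conf_def by (rule ext) (auto simp: restrict_map_def dom_def)

lemma determines_local:
  "determines N \<delta> (local_conf N c g) g q = determines N \<delta> c g q"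
  unfolding determines_def local_local ..

lemma local_le: "local_conf N c g \<subseteq>\<^sub>m c"
  unfolding local_conf_def map_le_def restrict_map_def by (auto split: if_splits)

lemma map_le_SomeD: "m1 \<subseteq>\<^sub>m m2 \<Longrightarrow> m1 x = Some v \<Longrightarrow> m2 x = Some v"
  unfolding map_le_def by force

lemma Sub_I: "dom c = lshift M g \<Longrightarrow> M \<subseteq> N \<Longrightarrow> (g, c) \<in> Sub N"
  unfolding Sub_def by blast

lemma local_Sub: "(g, local_conf N c g) \<in> Sub N"
proof -
  have "dom (local_conf N c g) = lshift {m\<in>N. g + m \<in> dom c} g"
  proof
    show "dom (local_conf N c g) \<subseteq> lshift {m \<in> N. g + m \<in> dom c} g"
    proof
      fix x assume "x \<in> dom (local_conf N c g)"
      then have x: "x \<in> lshift N g" "x \<in> dom c"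
        unfolding local_conf_def by (auto simp: restrict_map_def split: if_splits)
      then obtain m where "m \<in> N" "x = g + m" unfolding lshift_def by blast
      then show "x \<in> lshift {m \<in> N. g + m \<in> dom c} g" using x unfolding lshift_def by blast
    qed
    show "lshift {m \<in> N. g + m \<in> dom c} g \<subseteq> dom (local_conf N c g)"
    proof
      fix x assume "x \<in> lshift {m \<in> N. g + m \<in> dom c} g"
      then obtain m where "m \<in> N" "g + m \<in> dom c" "x = g + m" unfolding lshift_def by blast
      then have "x \<in> lshift N g" "x \<in> dom c" unfolding lshift_def by auto
      then show "x \<in> dom (local_conf N c g)" unfolding local_conf_def by (auto simp: restrict_map_def)
    qed
  qed
  moreover have "{m\<in>N. g + m \<in> dom c} \<subseteq> N" by blast
  ultimately show ?thesis by (rule Sub_I)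
qed

theorem mainTheorem16:
  fixes N :: "'g::group_add set" and \<delta> :: "('g \<rightharpoonup> 'q::finite) \<Rightarrow> 'q"
  shows "is_left_Kan_ext (Sub N) sub_le UNIV map_le UNIV map_le snd (sub_delta N \<delta>) (fine_trans N \<delta>)"
proof -
  have m1: "monotone_on (Sub N) sub_le (\<subseteq>\<^sub>m) snd"
    by (auto simp: monotone_on_def sub_le_def)
  have m2: "monotone_on (Sub N) sub_le (\<subseteq>\<^sub>m) (sub_delta N \<delta>)"
    unfolding monotone_on_def
  proof (intro ballI impI)
    fix x y :: "'g \<times> ('g \<rightharpoonup> 'q)" assume "sub_le x y"
    then have e: "fst x = fst y" and l: "snd x \<subseteq>\<^sub>m snd y" by (auto simp: sub_le_def)
    show "sub_delta N \<delta> x \<subseteq>\<^sub>m sub_delta N \<delta> y"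
      unfolding map_le_def sub_delta_def using e det_val_mono[OF l] by auto
  qed
  have m3: "monotone_on UNIV (\<subseteq>\<^sub>m) (\<subseteq>\<^sub>m) (fine_trans N \<delta>)"
    unfolding monotone_on_def
  proof (intro ballI impI)
    fix x y :: "'g \<rightharpoonup> 'q" assume l: "x \<subseteq>\<^sub>m y"
    show "fine_trans N \<delta> x \<subseteq>\<^sub>m fine_trans N \<delta> y"
      unfolding map_le_def fine_trans_def using det_val_mono[OF l] by auto
  qed
  have c1: "\<forall>a\<in>Sub N. sub_delta N \<delta> a \<subseteq>\<^sub>m fine_trans N \<delta> (snd a)"
    unfolding map_le_def sub_delta_def fine_trans_def by auto
  have c2: "fine_trans N \<delta> b \<subseteq>\<^sub>m h b"
    if H: "monotone_on UNIV (\<subseteq>\<^sub>m) (\<subseteq>\<^sub>m) h"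
      "\<forall>a\<in>Sub N. sub_delta N \<delta> a \<subseteq>\<^sub>m h (snd a)" for h b
    unfolding map_le_def
  proof (intro ballI)
    fix g assume "g \<in> dom (fine_trans N \<delta> b)"
    then have gd: "g \<in> det N \<delta> b" unfolding fine_trans_def by (simp add: domIff split: if_splits)
    then obtain q where q: "determines N \<delta> b g q" unfolding det_def by blast
    let ?l = "local_conf N b g"
    have ql: "determines N \<delta> ?l g q" using q determines_local[of N \<delta> b g q] by simp
    have s1: "sub_delta N \<delta> (g, ?l) \<subseteq>\<^sub>m h ?l" using bspec[OF H(2) local_Sub[of g N b]] by simp
    have s2: "sub_delta N \<delta> (g, ?l) g = Some q"
      using ql det_val_eq[OF ql] unfolding sub_delta_def det_def by auto
    have "h ?l g = Some q" using map_le_SomeD[OF s1 s2] .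
    moreover have "h ?l \<subseteq>\<^sub>m h b" using H(1) local_le[of N b g] unfolding monotone_on_def by blast
    ultimately have "h b g = Some q" using map_le_SomeD by metis
    moreover have "fine_trans N \<delta> b g = Some q"
      using gd det_val_eq[OF q] unfolding fine_trans_def by simp
    ultimately show "fine_trans N \<delta> b g = h b g" by simp
  qed
  show ?thesis unfolding is_left_Kan_ext_def using m1 m2 m3 c1 c2 by blast
qed

end
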